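(* Let $\mathfrak n$ be a finite-dimensional real non-singular 2-step nilpotent Lie algebra. Then $\mathfrak n$ admits no ad-invariant metric.
   Context: An ad-invariant metric on a Lie algebra $\mathfrak g$ is a non-degenerate symmetric bilinear form $\langle\,,\,\rangle$ on $\mathfrak g$ (not necessarily positive definite) satisfying $\langle [x,y],z\rangle+\langle y,[x,z]\rangle=0$ for all $x,y,z\in\mathfrak g$. A Lie algebra $\mathfrak n$ is 2-step nilpotent if $[\mathfrak n,\mathfrak n]\neq 0$ and $[\mathfrak n,[\mathfrak n,\mathfrak n]]=0$; then $\mathrm{ad}_x$ maps $\mathfrak n$ into the center $\mathfrak z$ of $\mathfrak n$ for every $x$. A 2-step nilpotent Lie algebra $\mathfrak n$ with center $\mathfrak z$ is called non-singular if for every $x\in\mathfrak n\setminus\mathfrak z$ the map $\mathrm{ad}_x:\mathfrak n\to\mathfrak z$ is surjective. *)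

theory Defs
  imports "HOL-Analysis.Analysis"
begin

text \<open>A finite-dimensional real Lie algebra is modelled as a type 'a of class
euclidean_space (any finite-dimensional real vector space; the inner product
is not used) together with a bracket operation.\<close>

definition lie_algebra :: "('a::real_vector \<Rightarrow> 'a \<Rightarrow> 'a) \<Rightarrow> bool" where
  "lie_algebra br \<longleftrightarrow>
     bilinear br \<and>
     (\<forall>x. br x x = 0) \<and>
     (\<forall>x y z. br x (br y z) + br y (br z x) + br z (br x y) = 0)"

definition lie_center :: "('a::real_vector \<Rightarrow> 'a \<Rightarrow> 'a) \<Rightarrow> 'a set" where
  "lie_center br = {z. \<forall>x. br x z = 0}"

definition two_step_nilpotent :: "('a::real_vector \<Rightarrow> 'a \<Rightarrow> 'a) \<Rightarrow> bool" where
  "two_step_nilpotent br \<longleftrightarrow>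
     (\<exists>x y. br x y \<noteq> 0) \<and> (\<forall>x y z. br x (br y z) = 0)"

definition nonsingular_2step :: "('a::real_vector \<Rightarrow> 'a \<Rightarrow> 'a) \<Rightarrow> bool" where
  "nonsingular_2step br \<longleftrightarrow>
     two_step_nilpotent br \<and>
     (\<forall>x. x \<notin> lie_center br \<longrightarrow> range (br x) = lie_center br)"

definition ad_invariant_metric ::
  "('a::real_vector \<Rightarrow> 'a \<Rightarrow> 'a) \<Rightarrow> ('a \<Rightarrow> 'a \<Rightarrow> real) \<Rightarrow> bool" where
  "ad_invariant_metric br B \<longleftrightarrow>
     bilinear B \<and>
     (\<forall>x y. B x y = B y x) \<and>
     (\<forall>x. (\<forall>y. B x y = 0) \<longrightarrow> x = 0) \<and>
     (\<forall>x y z. B (br x y) z + B y (br x z) = 0)"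

end

theory Submission
  imports Defs
begin

lemma rank_bound:
  fixes f :: "'a::euclidean_space \<Rightarrow> 'b::euclidean_space"
  assumes "linear f"
  shows "dim (range f) + dim {x. f x = 0} \<le> DIM('a)"
proof -
  let ?K = "{x. f x = 0}"
  let ?C = "{y \<in> UNIV. \<forall>x \<in> ?K. orthogonal x y}"
  have sK: "subspace ?K" unfolding subspace_def using linear_0[OF assms] linear_add[OF assms] linear_scale[OF assms] by auto
  have d: "dim ?C + dim ?K = dim (UNIV::'a set)"
    by (rule dim_subspace_orthogonal_to_vectors[OF sK subspace_UNIV]) simp
  have "range f \<subseteq> f ` ?C"
  proof
    fix v assume "v \<in> range f"
    then obtain u where u: "v = f u" by auto
    obtain y z where y: "y \<in> span ?K" and o: "\<And>w. w \<in> span ?K \<Longrightarrow> orthogonal z w"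
      and e: "u = y + z"
      using orthogonal_subspace_decomp_exists[of ?K u] by metis
    have "span ?K = ?K" using sK by (rule span_eq_iff[THEN iffD2])
    then have "y \<in> ?K" using y by (metis (no_types, lifting))
    then have "f u = f z" using e linear_add[OF assms] by simp
    moreover have "z \<in> ?C"
    proof (simp, intro allI impI)
      fix x assume "f x = 0"
      then have "orthogonal z x" using o[OF span_base[of x]] by simp
      then show "orthogonal x z" by (simp add: orthogonal_commute)
    qed
    ultimately show "v \<in> f ` ?C" using u by auto
  qed
  then have "dim (range f) \<le> dim (f ` ?C)" by (rule dim_subset)
  also have "\<dots> \<le> dim ?C" by (rule dim_image_le[OF assms])
  finally show ?thesis using d by simp
qed

theorem mainTheorem2:
  fixes br :: "'a::euclidean_space \<Rightarrow> 'a \<Rightarrow> 'a"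
  assumes "lie_algebra br"
    and "nonsingular_2step br"
  shows "\<not> (\<exists>B. ad_invariant_metric br B)"
proof
  assume "\<exists>B. ad_invariant_metric br B"
  then obtain B where aB: "ad_invariant_metric br B" by blast
  have bB: "bilinear B" and sym: "\<And>x y. B x y = B y x"
    and nd: "\<And>x. (\<forall>y. B x y = 0) \<Longrightarrow> x = 0"
    and inv: "\<And>x y z. B (br x y) z + B y (br x z) = 0"
    using aB unfolding ad_invariant_metric_def by blast+
  have bbr: "bilinear br" using assms(1) unfolding lie_algebra_def by blast
  let ?z = "lie_center br"
  have ns: "\<And>x. x \<notin> ?z \<Longrightarrow> range (br x) = ?z"
    using assms(2) unfolding nonsingular_2step_def by blast
  obtain a b where ab: "br a b \<noteq> 0"
    using assms(2) unfolding nonsingular_2step_def two_step_nilpotent_def by blast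
  have x0: "a \<notin> ?z"
  proof
    assume "a \<in> ?z"
    then have "br b a = 0" by (simp add: lie_center_def)
    moreover have "br a b = - br b a"
    proof -
      have "br (a+b) (a+b) = 0" "br a a = 0" "br b b = 0"
        using assms(1) unfolding lie_algebra_def by blast+
      then show ?thesis using bilinear_ladd[OF bbr] bilinear_radd[OF bbr]
        by (simp add: eq_neg_iff_add_eq_0 add.commute)
    qed
    ultimately show False using ab by simp
  qed
  have lin: "linear (br a)" using bbr by (simp add: bilinear_def)
  have sz: "subspace ?z"
    unfolding subspace_def lie_center_def
    using bilinear_rzero[OF bbr] bilinear_radd[OF bbr] bilinear_rmul[OF bbr] by auto
  have "insert a ?z \<subseteq> {y. br a y = 0}"
    using assms(1) unfolding lie_algebra_def lie_center_def
    using bilinear_def by auto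
  then have "dim (insert a ?z) \<le> dim {y. br a y = 0}" by (rule dim_subset)
  moreover have "dim (insert a ?z) = dim ?z + 1"
    proof -
    have "span ?z = ?z" using sz by (rule span_eq_iff[THEN iffD2])
    then have "a \<notin> span ?z" using x0 by (metis (no_types, lifting))
    then show ?thesis by (simp add: dim_insert)
  qed
  moreover have "dim (range (br a)) + dim {y. br a y = 0} \<le> DIM('a)"
    by (rule rank_bound[OF lin])
  ultimately have k1: "2 * dim ?z + 1 \<le> DIM('a)" using ns[OF x0] by simp
  have zperp: "?z = {w. \<forall>c\<in>?z. B c w = 0}"
  proof (intro set_eqI iffI)
    fix w assume w: "w \<in> ?z"
    show "w \<in> {w. \<forall>c\<in>?z. B c w = 0}"
    proof (intro CollectI ballI)
      fix c assume "c \<in> ?z"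
      then obtain y where "c = br a y" using ns[OF x0] by auto
      moreover have "br a w = 0" using w by (simp add: lie_center_def)
      ultimately show "B c w = 0" using inv[of a y w] bilinear_rzero[OF bB] by simp
    qed
  next
    fix w assume w: "w \<in> {w. \<forall>c\<in>?z. B c w = 0}"
    have "br x w = 0" for x
    proof (rule nd, intro allI)
      fix y
      have "br x y \<in> ?z" using assms(2)
        unfolding nonsingular_2step_def two_step_nilpotent_def lie_center_def by blast
      then have "B (br x y) w = 0" using w by auto
      then have "B y (br x w) = 0" using inv[of x y w] by simp
      then show "B (br x w) y = 0" using sym by simp
    qed
    then show "w \<in> ?z" by (simp add: lie_center_def)
  qed
  define g where "g c = (\<Sum>i\<in>Basis. B c i *\<^sub>R i)" for c
  have lg: "linear g"
    unfolding g_def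
    by (rule linearI) (simp_all add: bilinear_ladd[OF bB] bilinear_lmul[OF bB]
        scaleR_add_left sum.distrib scaleR_sum_right)
  have gi: "g c \<bullet> w = B c w" for c w
  proof -
    have lc: "linear (B c)" using bB by (simp add: bilinear_def)
    have "B c w = (B c w) \<bullet> 1" by simp
    also have "\<dots> = (\<Sum>i\<in>Basis. (w \<bullet> i) * (B c i \<bullet> 1))"
      by (rule Linear_Algebra.linear_componentwise[OF lc])
    also have "\<dots> = g c \<bullet> w"
      unfolding g_def by (simp add: inner_sum_left inner_commute mult.commute inner_sum_right)
    finally show ?thesis by simp
  qed
  have sg: "subspace (g ` ?z)" by (rule linear_subspace_image[OF lg sz])
  have eq: "{w. \<forall>c\<in>?z. B c w = 0} = {y \<in> UNIV. \<forall>x \<in> g ` ?z. orthogonal x y}"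
    by (auto simp: orthogonal_def gi)
  have "dim {y \<in> UNIV. \<forall>x \<in> g ` ?z. orthogonal x y} + dim (g ` ?z) = dim (UNIV::'a set)"
    by (rule dim_subspace_orthogonal_to_vectors[OF sg subspace_UNIV]) simp
  moreover have "dim (g ` ?z) \<le> dim ?z" by (rule dim_image_le[OF lg])
  ultimately have "DIM('a) \<le> 2 * dim ?z" using zperp eq by simp
  with k1 show False by simp
qed

end
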